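(* Let $d=2^L$ for a positive integer $L$, let $n\ge 1$, and let $X^\natural=\mathbf 1 e_1^{\mathsf T}\in\mathbb R^{d\times n}$ (the matrix whose first column is all ones and whose other entries are zero). Suppose each entry of $X^\natural$ is observed independently with probability $p\in(0,1]$, and let $\Omega\subset[d]\times[n]$ be the set of observed positions. Then, with probability at least $\frac12\left(1-(1-p)^d-dp(1-p)^{d-1}\right)$, $X^\natural$ is the unique solution of $$\min_{X\in\mathbb C^{d\times n}}\ \sum_{i=1}^d\big\|\mathcal H\big((e_i^{\mathsf T}FX)^{\mathsf T}\big)\big\|_*\quad\text{subject to}\quad \mathcal P_\Omega(X)=\mathcal P_\Omega(X^\natural).$$ In particular this probability bound tends to $1/2$ as $d\to\infty$ (for fixed $p$).
   Context: $n_1,n_2$ are positive integers with $n_1+n_2=n+1$. For $x=(x_1,\dots,x_n)\in\mathbb C^n$, $\mathcal H(x)\in\mathbb C^{n_1\times n_2}$ is the Hankel matrix with $[\mathcal H(x)]_{j,k}=x_{j+k-1}$. $F\in\mathbb C^{d\times d}$ is the unitary DFT matrix, $F_{jk}=d^{-1/2}e^{-2\pi \mathrm{i}(j-1)(k-1)/d}$; $e_i$ is the $i$-th standard basis vector, so $e_i^{\mathsf T}FX$ is the $i$-th row of $FX$. $\|\cdot\|_*$ is the nuclear norm (sum of singular values). $\mathcal P_\Omega:\mathbb C^{d\times n}\to\mathbb C^{d\times n}$ keeps the entries indexed by $\Omega$ and sets all other entries to zero. *)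

theory Defs
  imports "Jordan_Normal_Form.Char_Poly"
begin

text \<open>Singular values enter via the eigenvalues (with algebraic multiplicity) of
  the Gram matrix A^H A; the nuclear norm is the sum of their square roots,
  i.e. the sum of the singular values of A (extra zero eigenvalues contribute 0).\<close>
definition conj_transpose :: "complex mat \<Rightarrow> complex mat" where
  "conj_transpose A = mat (dim_col A) (dim_row A) (\<lambda>(i,j). cnj (A $$ (j,i)))"

definition nuclear_norm :: "complex mat \<Rightarrow> real" where
  "nuclear_norm A =
     sum_mset (image_mset (\<lambda>z. sqrt (Re z)) (proots (char_poly (conj_transpose A * A))))"

text \<open>Hankel matrix, 0-indexed: entry (j,k) is x (j+k) (paper: x_{j+k-1}, 1-indexed).\<close>
definition hankel :: "nat \<Rightarrow> nat \<Rightarrow> (nat \<Rightarrow> complex) \<Rightarrow> complex mat" where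
  "hankel n1 n2 x = mat n1 n2 (\<lambda>(j,k). x (j + k))"

definition dft_mat :: "nat \<Rightarrow> complex mat" where
  "dft_mat d = mat d d (\<lambda>(j,k).
      exp (- 2 * of_real pi * \<i> * of_nat j * of_nat k / of_nat d) / of_real (sqrt (real d)))"

definition hankel_obj :: "nat \<Rightarrow> nat \<Rightarrow> nat \<Rightarrow> complex mat \<Rightarrow> real" where
  "hankel_obj d n1 n2 X =
     (\<Sum>i<d. nuclear_norm (hankel n1 n2 (\<lambda>k. (dft_mat d * X) $$ (i, k))))"

definition P_Omega :: "(nat \<times> nat) set \<Rightarrow> complex mat \<Rightarrow> complex mat" where
  "P_Omega \<Omega> X = mat (dim_row X) (dim_col X) (\<lambda>ij. if ij \<in> \<Omega> then X $$ ij else 0)"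

definition unique_solution :: "nat \<Rightarrow> nat \<Rightarrow> nat \<Rightarrow> nat \<Rightarrow> (nat \<times> nat) set \<Rightarrow> complex mat \<Rightarrow> bool" where
  "unique_solution d n n1 n2 \<Omega> X0 \<longleftrightarrow>
     {X \<in> carrier_mat d n. P_Omega \<Omega> X = P_Omega \<Omega> X0 \<and>
        (\<forall>Y \<in> carrier_mat d n. P_Omega \<Omega> Y = P_Omega \<Omega> X0 \<longrightarrow>
            hankel_obj d n1 n2 X \<le> hankel_obj d n1 n2 Y)} = {X0}"

definition bernoulli_prob :: "nat \<Rightarrow> nat \<Rightarrow> real \<Rightarrow> ((nat \<times> nat) set \<Rightarrow> bool) \<Rightarrow> real" where
  "bernoulli_prob d n p E =
     (\<Sum>\<Omega> \<in> {\<Omega>. \<Omega> \<subseteq> {0..<d} \<times> {0..<n} \<and> E \<Omega>}.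
        p ^ card \<Omega> * (1 - p) ^ (d * n - card \<Omega>))"

definition X_nat :: "nat \<Rightarrow> nat \<Rightarrow> complex mat" where
  "X_nat d n = mat d n (\<lambda>(j,k). if k = 0 then 1 else 0)"

end

theory Submission
  imports Defs "Jordan_Normal_Form.Schur_Decomposition"
begin



definition tr :: "complex mat \<Rightarrow> complex" where
  "tr M = (\<Sum>i<dim_row M. M $$ (i,i))"

lemma tr_comm:
  assumes "X \<in> carrier_mat m m" "Y \<in> carrier_mat m m"
  shows "tr (X * Y) = tr (Y * X)"
proof -
  have "tr (X * Y) = (\<Sum>i<m. \<Sum>l<m. X $$ (i,l) * Y $$ (l,i))"
    using assms by (simp add: tr_def scalar_prod_def atLeast0LessThan)
  also have "\<dots> = (\<Sum>l<m. \<Sum>i<m. Y $$ (l,i) * X $$ (i,l))"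
    by (subst sum.swap) (simp add: mult.commute)
  also have "\<dots> = tr (Y * X)"
    using assms by (simp add: tr_def scalar_prod_def atLeast0LessThan)
  finally show ?thesis .
qed

lemma tr_similar:
  assumes "similar_mat M T" "M \<in> carrier_mat m m"
  shows "tr M = tr T"
proof -
  from similar_matD[OF assms(1)] obtain k P Q where
    c: "{M,T,P,Q} \<subseteq> carrier_mat k k" and PQ: "P * Q = 1\<^sub>m k" and QP: "Q * P = 1\<^sub>m k"
    and M: "M = P * T * Q" by blast
  have "tr M = tr (P * (T * Q))" using M c assoc_mult_mat[of P k k T k Q k] by simp
  also have "\<dots> = tr ((T * Q) * P)" using c by (intro tr_comm) auto
  also have "\<dots> = tr (T * (Q * P))" using c assoc_mult_mat[of T k k Q k P k] by simp
  also have "\<dots> = tr T" using c QP right_mult_one_mat[of T k k] by simp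
  finally show ?thesis .
qed

lemma proots_diag:
  assumes "T \<in> carrier_mat m m" "upper_triangular T"
  shows "proots (char_poly T) = mset (diag_mat T)"
proof -
  have "char_poly T = (\<Prod>a\<leftarrow>diag_mat T. [:- a, 1:])"
    by (rule char_poly_upper_triangular[OF assms])
  also have "proots \<dots> = (\<Sum>p\<leftarrow>map (\<lambda>a. [:- a, 1:]) (diag_mat T). proots p)"
  proof -
    have "0 \<notin> set (map (\<lambda>a. [:- a, 1:]) (diag_mat T))" by auto
    from proots_prod_list[OF this] show ?thesis by (simp add: o_def)
  qed
  also have "\<dots> = (\<Sum>a\<leftarrow>diag_mat T. {#a#})"
    by (simp add: o_def)
  also have "\<dots> = mset (diag_mat T)"
    by (induction "diag_mat T") (auto)
  finally show ?thesis .
qed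

lemma sum_list_map_mset: "(\<Sum>a\<leftarrow>xs. {#a#}) = mset xs"
  by (induction xs) auto

lemma roots_sum_trace:
  assumes M: "M \<in> carrier_mat m m"
  shows "sum_mset (proots (char_poly M)) = tr M"
proof -
  obtain es where es: "char_poly M = (\<Prod>a\<leftarrow>es. [:- a, 1:])"
    using char_poly_factorized[OF M] by blast
  obtain T where T: "T \<in> carrier_mat m m" "upper_triangular T" "similar_mat M T"
    using schur_decomposition_exists[OF M es] by blast
  have "proots (char_poly M) = proots (char_poly T)"
    using char_poly_similar[OF T(3)] by simp
  also have "\<dots> = mset (diag_mat T)" by (rule proots_diag[OF T(1,2)])
  finally have "sum_mset (proots (char_poly M)) = sum_list (diag_mat T)"
    by (simp add: sum_mset_sum_list)
  also have "\<dots> = tr T" using T(1)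
    by (simp add: diag_mat_def tr_def sum_list_sum_nth atLeast0LessThan)
  also have "\<dots> = tr M" using tr_similar[OF T(3) M] by simp
  finally show ?thesis .
qed

lemma gram_carrier: "A \<in> carrier_mat r c \<Longrightarrow> conj_transpose A * A \<in> carrier_mat c c"
  unfolding conj_transpose_def by (rule mult_carrier_mat[of _ c r]) auto

lemma gram_entry:
  assumes "A \<in> carrier_mat r c" "i < c" "k < c"
  shows "(conj_transpose A * A) $$ (i,k) = (\<Sum>j<r. cnj (A $$ (j,i)) * A $$ (j,k))"
  using assms by (simp add: conj_transpose_def scalar_prod_def atLeast0LessThan)

lemma quad_form:
  fixes A :: "complex mat" and v :: "complex vec"
  shows "(\<Sum>l<c. cnj (v$l) * (\<Sum>k<c. (\<Sum>j<r. cnj (A $$ (j,l)) * A $$ (j,k)) * v$k))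
       = (\<Sum>j<r. cnj (\<Sum>l<c. A $$ (j,l) * v$l) * (\<Sum>k<c. A $$ (j,k) * v$k))"
proof -
  have "(\<Sum>l<c. cnj (v$l) * (\<Sum>k<c. (\<Sum>j<r. cnj (A $$ (j,l)) * A $$ (j,k)) * v$k))
      = (\<Sum>l<c. \<Sum>k<c. \<Sum>j<r. cnj (v$l) * cnj (A $$ (j,l)) * A $$ (j,k) * v$k)"
    by (simp add: sum_distrib_left sum_distrib_right mult.assoc)
  also have "\<dots> = (\<Sum>l<c. \<Sum>j<r. \<Sum>k<c. cnj (v$l) * cnj (A $$ (j,l)) * A $$ (j,k) * v$k)"
    by (rule sum.cong[OF refl], rule sum.swap)
  also have "\<dots> = (\<Sum>j<r. \<Sum>l<c. \<Sum>k<c. cnj (v$l) * cnj (A $$ (j,l)) * A $$ (j,k) * v$k)"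
    by (rule sum.swap)
  also have "\<dots> = (\<Sum>j<r. cnj (\<Sum>l<c. A $$ (j,l) * v$l) * (\<Sum>k<c. A $$ (j,k) * v$k))"
    by (simp add: sum_distrib_left sum_distrib_right mult.assoc mult.left_commute mult.commute)
  finally show ?thesis .
qed

lemma sum_cnj_self: "(\<Sum>j\<in>S. cnj (f j) * f j) = complex_of_real (\<Sum>j\<in>S. (cmod (f j))\<^sup>2)"
proof -
  have "cnj (f j) * f j = complex_of_real ((cmod (f j))\<^sup>2)" for j
    by (subst complex_norm_square) (simp add: mult.commute)
  thus ?thesis by (simp add: of_real_sum)
qed

lemma gram_roots_nonneg:
  assumes A: "A \<in> carrier_mat r c"
    and z: "z \<in># proots (char_poly (conj_transpose A * A))"
  shows "Re z \<ge> 0"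
proof -
  define B where "B = conj_transpose A * A"
  have B: "B \<in> carrier_mat c c" using gram_carrier[OF A] by (simp add: B_def)
  have nz: "char_poly B \<noteq> 0" using degree_monic_char_poly[OF B] by auto
  have "poly (char_poly B) z = 0"
    using z nz order_gt_0_iff[OF nz, of z] by (simp add: B_def flip: count_greater_zero_iff)
  hence "eigenvalue B z" using eigenvalue_root_char_poly[OF B] by simp
  then obtain v where v: "v \<in> carrier_vec c" "v \<noteq> 0\<^sub>v c" "B *\<^sub>v v = z \<cdot>\<^sub>v v"
    unfolding eigenvalue_def eigenvector_def using B by auto
  have Bv: "(\<Sum>k<c. B $$ (l,k) * v$k) = z * v$l" if "l < c" for l
  proof -
    have "(B *\<^sub>v v) $ l = z * v$l" using v that by simp
    moreover have "(B *\<^sub>v v) $ l = (\<Sum>k<c. B $$ (l,k) * v$k)"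
      using B v(1) that by (simp add: scalar_prod_def atLeast0LessThan)
    ultimately show ?thesis by simp
  qed
  define S where "S = (\<Sum>l<c. cnj (v$l) * (\<Sum>k<c. B $$ (l,k) * v$k))"
  have S1: "S = z * complex_of_real (\<Sum>l<c. (cmod (v$l))\<^sup>2)"
  proof -
    have "S = (\<Sum>l<c. z * (cnj (v$l) * v$l))" unfolding S_def
      by (intro sum.cong refl) (simp add: Bv)
    also have "\<dots> = z * (\<Sum>l<c. cnj (v$l) * v$l)" by (simp add: sum_distrib_left)
    finally show ?thesis by (simp add: sum_cnj_self)
  qed
  have S2: "S = complex_of_real (\<Sum>j<r. (cmod (\<Sum>l<c. A $$ (j,l) * v$l))\<^sup>2)"
  proof -
    have "S = (\<Sum>l<c. cnj (v$l) * (\<Sum>k<c. (\<Sum>j<r. cnj (A $$ (j,l)) * A $$ (j,k)) * v$k))"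
      unfolding S_def B_def using A by (intro sum.cong refl) (simp add: gram_entry)
    also have "\<dots> = (\<Sum>j<r. cnj (\<Sum>l<c. A $$ (j,l) * v$l) * (\<Sum>k<c. A $$ (j,k) * v$k))"
      by (rule quad_form)
    finally show ?thesis by (simp only: sum_cnj_self)
  qed
  obtain l where l: "l < c" "v$l \<noteq> 0"
    using v(1,2) by (metis carrier_vecD eq_vecI index_zero_vec(1) index_zero_vec(2))
  have pos: "(\<Sum>l<c. (cmod (v$l))\<^sup>2) > 0"
  proof -
    have "(cmod (v$l))\<^sup>2 > 0" using l by simp
    moreover have "(cmod (v$l))\<^sup>2 \<le> (\<Sum>l<c. (cmod (v$l))\<^sup>2)"
      using l by (intro member_le_sum) auto
    ultimately show ?thesis by linarith
  qed
  define T where "T = (\<Sum>j<r. (cmod (\<Sum>l<c. A $$ (j,l) * v$l))\<^sup>2)"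
  define P where "P = (\<Sum>l<c. (cmod (v$l))\<^sup>2)"
  have "z * complex_of_real P = complex_of_real T" using S1 S2 by (simp add: P_def T_def)
  hence "Re (z * complex_of_real P) = Re (complex_of_real T)" by simp
  hence "Re z * P = T" by simp
  moreover have "T \<ge> 0" unfolding T_def by (intro sum_nonneg) auto
  ultimately show ?thesis using pos P_def
    by (metis linorder_not_le mult_neg_pos not_less)
qed

lemma msum_Re: "Re (sum_mset M) = sum_mset (image_mset Re M)"
  by (induction M) auto

lemma msum_nonneg: "(\<forall>x\<in>#M. (0::real) \<le> x) \<Longrightarrow> 0 \<le> sum_mset M"
  by (induction M) auto

lemma msqrt: "(\<forall>x\<in>#M. 0 \<le> x) \<Longrightarrow> sqrt (sum_mset M) \<le> sum_mset (image_mset sqrt M)"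
proof (induction M)
  case empty then show ?case by simp
next
  case (add x M)
  have "sqrt (sum_mset (add_mset x M)) = sqrt (x + sum_mset M)" by simp
  also have "\<dots> \<le> sqrt x + sqrt (sum_mset M)"
    using add.prems by (intro sqrt_add_le_add_sqrt) (auto intro: msum_nonneg)
  also have "\<dots> \<le> sqrt x + sum_mset (image_mset sqrt M)" using add by auto
  finally show ?case by simp
qed

definition fsq :: "nat \<Rightarrow> nat \<Rightarrow> complex mat \<Rightarrow> real" where
  "fsq r c A = (\<Sum>i<c. \<Sum>j<r. (cmod (A $$ (j,i)))\<^sup>2)"

lemma nuc_ge_frob:
  assumes A: "A \<in> carrier_mat r c"
  shows "sqrt (fsq r c A) \<le> nuclear_norm A"
proof -
  define B where "B = conj_transpose A * A"
  have B: "B \<in> carrier_mat c c" using gram_carrier[OF A] by (simp add: B_def)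
  define R where "R = proots (char_poly B)"
  have "sum_mset R = tr B" unfolding R_def by (rule roots_sum_trace[OF B])
  also have "\<dots> = (\<Sum>i<c. B $$ (i,i))" using B by (simp add: tr_def)
  also have "\<dots> = (\<Sum>i<c. \<Sum>j<r. cnj (A $$ (j,i)) * A $$ (j,i))"
    by (rule sum.cong[OF refl]) (simp add: B_def gram_entry[OF A])
  also have "\<dots> = (\<Sum>i<c. complex_of_real (\<Sum>j<r. (cmod (A $$ (j,i)))\<^sup>2))"
    by (intro sum.cong refl) (rule sum_cnj_self)
  also have "\<dots> = complex_of_real (fsq r c A)"
    unfolding fsq_def by (simp only: of_real_sum)
  finally have "Re (sum_mset R) = fsq r c A" by simp
  hence e: "fsq r c A = sum_mset (image_mset Re R)" by (simp add: msum_Re)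
  have nn: "\<forall>x\<in>#image_mset Re R. 0 \<le> x"
    using gram_roots_nonneg[OF A] by (auto simp: R_def B_def)
  have "sqrt (fsq r c A) \<le> sum_mset (image_mset sqrt (image_mset Re R))"
    unfolding e by (rule msqrt[OF nn])
  also have "\<dots> = nuclear_norm A"
    by (simp add: nuclear_norm_def R_def B_def multiset.map_comp o_def)
  finally show ?thesis .
qed

lemma nuc_triangular:
  assumes A: "A \<in> carrier_mat r c" and ut: "upper_triangular (conj_transpose A * A)"
  shows "nuclear_norm A = (\<Sum>i<c. sqrt (Re ((conj_transpose A * A) $$ (i,i))))"
proof -
  define B where "B = conj_transpose A * A"
  have B: "B \<in> carrier_mat c c" using gram_carrier[OF A] by (simp add: B_def)
  have "proots (char_poly B) = mset (diag_mat B)" using proots_diag[OF B] ut B_def by simp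
  hence "nuclear_norm A = sum_list (map (\<lambda>z. sqrt (Re z)) (diag_mat B))"
    unfolding nuclear_norm_def B_def by (metis mset_map sum_mset_sum_list)
  also have "\<dots> = (\<Sum>i<c. sqrt (Re (B $$ (i,i))))"
    using B by (simp add: diag_mat_def sum_list_sum_nth atLeast0LessThan)
  finally show ?thesis by (simp add: B_def)
qed




lemma cis_eq_1_dvd:
  fixes r :: int assumes d: "d > 0" and c: "cis (2 * pi * of_int r / real d) = 1"
  shows "int d dvd r"
proof -
  have "cos (2 * pi * of_int r / real d) = 1" using c
    by (metis cis.sel(1) one_complex.sel(1))
  then obtain n :: int where n: "2 * pi * of_int r / real d = of_int n * 2 * pi"
    using cos_one_2pi_int by blast
  hence "real_of_int r = of_int n * real d" using d
    by (simp add: field_simps)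
  hence "r = n * int d" by (metis of_int_eq_iff of_int_mult of_int_of_nat_eq)
  thus ?thesis by simp
qed

lemma root_sum:
  fixes m :: int assumes d: "d > 0"
  shows "(\<Sum>i<d. cis (2 * pi * real i * of_int m / real d)) = (if int d dvd m then of_nat d else 0)"
proof (cases "int d dvd m")
  case True
  then obtain t where t: "m = int d * t" by blast
  have "cis (2 * pi * real i * of_int m / real d) = 1" for i
  proof -
    have "2 * pi * real i * of_int m / real d = 2 * pi * of_int (int i * t)"
      using d by (simp add: t field_simps)
    thus ?thesis by (simp del: of_int_mult)
  qed
  thus ?thesis using True by simp
next
  case False
  define x where "x = cis (2 * pi * of_int m / real d)"
  have x1: "x \<noteq> 1" unfolding x_def using cis_eq_1_dvd[OF d, of m] False by blast
  have xp: "cis (2 * pi * real i * of_int m / real d) = x ^ i" for i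
    unfolding x_def DeMoivre by (simp add: field_simps)
  have xd: "x ^ d = 1"
  proof -
    have "x ^ d = cis (2 * pi * real d * of_int m / real d)" by (rule xp[symmetric])
    also have "2 * pi * real d * of_int m / real d = 2 * pi * of_int m" using d by simp
    finally show ?thesis by simp
  qed
  have "(\<Sum>i<d. cis (2 * pi * real i * of_int m / real d)) = (\<Sum>i<d. x ^ i)" by (simp add: xp)
  also have "\<dots> = 0" using x1 xd by (simp add: sum_gp_strict)
  finally show ?thesis using False by simp
qed

lemma F_entry:
  assumes "j < d" "k < d"
  shows "dft_mat d $$ (j,k) = cis (- 2 * pi * real j * real k / real d) / complex_of_real (sqrt (real d))"
proof -
  have "exp (- 2 * complex_of_real pi * \<i> * of_nat j * of_nat k / of_nat d)
        = cis (- 2 * pi * real j * real k / real d)"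
    by (simp add: cis_conv_exp algebra_simps)
  thus ?thesis using assms by (simp add: dft_mat_def)
qed

lemma F_carrier: "dft_mat d \<in> carrier_mat d d"
  by (simp add: dft_mat_def)

lemma F_unitary:
  assumes d: "d > 0"
  shows "conj_transpose (dft_mat d) * dft_mat d = 1\<^sub>m d"
proof (rule eq_matI)
  show "dim_row (conj_transpose (dft_mat d) * dft_mat d) = dim_row (1\<^sub>m d)"
    by (simp add: conj_transpose_def dft_mat_def)
  show "dim_col (conj_transpose (dft_mat d) * dft_mat d) = dim_col (1\<^sub>m d)"
    by (simp add: conj_transpose_def dft_mat_def)
  fix j k assume j: "j < dim_row (1\<^sub>m d)" and k: "k < dim_col (1\<^sub>m d)"
  hence jk: "j < d" "k < d" by auto
  have "(conj_transpose (dft_mat d) * dft_mat d) $$ (j,k)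
      = (\<Sum>i<d. cnj (dft_mat d $$ (i,j)) * dft_mat d $$ (i,k))"
    using gram_entry[OF F_carrier jk] .
  also have "\<dots> = (\<Sum>i<d. cis (2 * pi * real i * of_int (int j - int k) / real d) / of_nat d)"
  proof (rule sum.cong[OF refl])
    fix i assume "i \<in> {..<d}"
    hence i: "i < d" by simp
    define sq where "sq = complex_of_real (sqrt (real d))"
    have s: "sq * sq = of_nat d"
      unfolding sq_def of_real_mult[symmetric] real_sqrt_mult_self by simp
    have e1: "cnj (dft_mat d $$ (i,j)) = cis (2 * pi * real i * real j / real d) / sq"
      using i jk by (simp add: F_entry cis_cnj sq_def)
    have e2: "dft_mat d $$ (i,k) = cis (- 2 * pi * real i * real k / real d) / sq"
      using i jk by (simp add: F_entry sq_def)
    have ang: "2 * pi * real i * real j / real d + - 2 * pi * real i * real k / real d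
        = 2 * pi * real i * of_int (int j - int k) / real d"
      by (simp add: add_divide_distrib[symmetric] diff_divide_distrib[symmetric] right_diff_distrib)
    have "cnj (dft_mat d $$ (i,j)) * dft_mat d $$ (i,k)
       = (cis (2 * pi * real i * real j / real d) * cis (- 2 * pi * real i * real k / real d)) / (sq * sq)"
      unfolding e1 e2 by (simp only: times_divide_times_eq)
    also have "\<dots> = cis (2 * pi * real i * of_int (int j - int k) / real d) / of_nat d"
      unfolding s cis_mult ang ..
    finally show "cnj (dft_mat d $$ (i,j)) * dft_mat d $$ (i,k)
       = cis (2 * pi * real i * of_int (int j - int k) / real d) / of_nat d" .
  qed
  also have "\<dots> = (\<Sum>i<d. cis (2 * pi * real i * of_int (int j - int k) / real d)) / of_nat d"
    by (simp add: sum_divide_distrib)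
  also have "\<dots> = (if j = k then 1 else 0)"
  proof -
    have "int d dvd (int j - int k) \<longleftrightarrow> j = k"
    proof
      assume "int d dvd (int j - int k)"
      then obtain t where t: "int j - int k = int d * t" by blast
      have "t = 0"
      proof (rule ccontr)
        assume "t \<noteq> 0"
        hence t1: "\<bar>t\<bar> \<ge> 1" by linarith
        have "int d * 1 \<le> int d * \<bar>t\<bar>" by (rule mult_left_mono[OF t1]) simp
        hence "\<bar>int d * t\<bar> \<ge> int d" by (simp add: abs_mult)
        thus False using t jk by linarith
      qed
      thus "j = k" using t by simp
    qed simp
    thus ?thesis using root_sum[OF d, of "int j - int k"] d by simp
  qed
  also have "\<dots> = 1\<^sub>m d $$ (j,k)" using jk by simp
  finally show "(conj_transpose (dft_mat d) * dft_mat d) $$ (j,k) = 1\<^sub>m d $$ (j,k)" .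
qed




lemma hankel_carrier: "hankel n1 n2 x \<in> carrier_mat n1 n2"
  by (simp add: hankel_def)

lemma hankel_entry: "j < n1 \<Longrightarrow> k < n2 \<Longrightarrow> hankel n1 n2 x $$ (j,k) = x (j+k)"
  by (simp add: hankel_def)

lemma fsq_hankel: "fsq n1 n2 (hankel n1 n2 x) = (\<Sum>p\<in>{..<n2} \<times> {..<n1}. (cmod (x (snd p + fst p)))\<^sup>2)"
  unfolding fsq_def by (simp add: hankel_entry sum.cartesian_product case_prod_unfold)

lemma hank_frob_two:
  assumes "(k,j) \<in> {..<n2} \<times> {..<n1}" "(k,j) \<noteq> (0,0)" "n1 > 0" "n2 > 0"
  shows "(cmod (x 0))\<^sup>2 + (cmod (x (j+k)))\<^sup>2 \<le> fsq n1 n2 (hankel n1 n2 x)"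
proof -
  have "(cmod (x 0))\<^sup>2 + (cmod (x (j+k)))\<^sup>2 = (\<Sum>p\<in>{(0,0),(k,j)}. (cmod (x (snd p + fst p)))\<^sup>2)"
    using assms(2) by (simp add: add.commute)
  also have "\<dots> \<le> (\<Sum>p\<in>{..<n2} \<times> {..<n1}. (cmod (x (snd p + fst p)))\<^sup>2)"
    using assms by (intro sum_mono2) auto
  finally show ?thesis by (simp add: fsq_hankel)
qed

lemma hank_frob_ge:
  assumes "n1 > 0" "n2 > 0"
  shows "cmod (x 0) \<le> sqrt (fsq n1 n2 (hankel n1 n2 x))"
proof -
  have "(cmod (x 0))\<^sup>2 = (\<Sum>p\<in>{(0::nat,0::nat)}. (cmod (x (snd p + fst p)))\<^sup>2)" by simp
  also have "\<dots> \<le> fsq n1 n2 (hankel n1 n2 x)"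
    unfolding fsq_hankel using assms by (intro sum_mono2) auto
  finally show ?thesis by (rule real_le_rsqrt)
qed

lemma hank_frob_eq:
  assumes "n1 > 0" "n2 > 0" "n1 + n2 = n + 1"
    and eq: "sqrt (fsq n1 n2 (hankel n1 n2 x)) = cmod (x 0)" and t: "0 < t" "t < n"
  shows "x t = 0"
proof -
  define j where "j = min t (n1 - 1)"
  define k where "k = t - j"
  have j1: "j < n1" "j \<le> t" using assms(1) unfolding j_def by auto
  have k2: "k < n2"
  proof (cases "t \<le> n1 - 1")
    case True thus ?thesis using assms(2) unfolding k_def j_def by simp
  next
    case False thus ?thesis using assms(1,2,3) t unfolding k_def j_def by simp
  qed
  have jk: "(k,j) \<in> {..<n2} \<times> {..<n1}" "(k,j) \<noteq> (0,0)" "j + k = t"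
    using j1 k2 t unfolding k_def by auto
  have "(cmod (x 0))\<^sup>2 + (cmod (x t))\<^sup>2 \<le> fsq n1 n2 (hankel n1 n2 x)"
    using hank_frob_two[OF jk(1,2) assms(1,2)] jk(3) by simp
  moreover have "fsq n1 n2 (hankel n1 n2 x) = (cmod (x 0))\<^sup>2"
  proof -
    have "fsq n1 n2 (hankel n1 n2 x) \<ge> 0" unfolding fsq_def by (intro sum_nonneg) auto
    hence "fsq n1 n2 (hankel n1 n2 x) = (sqrt (fsq n1 n2 (hankel n1 n2 x)))\<^sup>2" by simp
    thus ?thesis using eq by simp
  qed
  ultimately have "(cmod (x t))\<^sup>2 \<le> 0" by simp
  thus ?thesis by simp
qed

lemma hank_nuc_single:
  assumes "n1 + n2 = n + 1" "n1 > 0" "n2 > 0" and z: "\<And>t. 0 < t \<Longrightarrow> t < n \<Longrightarrow> x t = 0"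
  shows "nuclear_norm (hankel n1 n2 x) = cmod (x 0)"
proof -
  define H where "H = hankel n1 n2 x"
  have H: "H \<in> carrier_mat n1 n2" by (simp add: H_def hankel_carrier)
  have xz: "x (j+a) = 0" if "j < n1" "a < n2" "j + a \<noteq> 0" for j a
    using z[of "j+a"] that assms(1) by auto
  have G: "(conj_transpose H * H) $$ (a,b) = (\<Sum>j<n1. cnj (x (j+a)) * x (j+b))"
    if "a < n2" "b < n2" for a b
    using gram_entry[OF H that] that by (simp add: H_def hankel_entry)
  have ut: "upper_triangular (conj_transpose H * H)"
    unfolding upper_triangular_def
  proof (intro allI impI)
    fix a b assume a: "a < dim_row (conj_transpose H * H)" and b: "b < a"
    have a2: "a < n2" using a H by (simp add: conj_transpose_def)
    have "(\<Sum>j<n1. cnj (x (j+a)) * x (j+b)) = 0"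
      by (rule sum.neutral) (use xz a2 b in auto)
    thus "(conj_transpose H * H) $$ (a,b) = 0" using G[OF a2] a2 b by simp
  qed
  have "nuclear_norm H = (\<Sum>a<n2. sqrt (Re ((conj_transpose H * H) $$ (a,a))))"
    by (rule nuc_triangular[OF H ut])
  also have "\<dots> = (\<Sum>a<n2. if a = 0 then cmod (x 0) else 0)"
  proof (rule sum.cong[OF refl])
    fix a assume "a \<in> {..<n2}"
    hence a: "a < n2" by simp
    have "(conj_transpose H * H) $$ (a,a) = (\<Sum>j<n1. cnj (x (j+a)) * x (j+a))" using G[OF a a] .
    also have "\<dots> = (if a = 0 then cnj (x 0) * x 0 else 0)"
    proof (cases "a = 0")
      case True
      have "(\<Sum>j<n1. cnj (x (j+a)) * x (j+a)) = (\<Sum>j<n1. if j = 0 then cnj (x 0) * x 0 else 0)"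
        by (rule sum.cong[OF refl]) (use xz[of _ 0] a True in auto)
      also have "\<dots> = cnj (x 0) * x 0" using assms(2) by (simp add: sum.delta)
      finally show ?thesis using True by simp
    next
      case False
      have "(\<Sum>j<n1. cnj (x (j+a)) * x (j+a)) = 0"
        by (rule sum.neutral) (use xz a False in auto)
      thus ?thesis using False by simp
    qed
    moreover have "cnj (x 0) * x 0 = complex_of_real ((cmod (x 0))\<^sup>2)"
      by (subst complex_norm_square) (simp add: mult.commute)
    ultimately have "Re ((conj_transpose H * H) $$ (a,a)) = (if a = 0 then (cmod (x 0))\<^sup>2 else 0)"
      by (simp only:) simp
    thus "sqrt (Re ((conj_transpose H * H) $$ (a,a))) = (if a = 0 then cmod (x 0) else 0)"
      by simp
  qed
  also have "\<dots> = cmod (x 0)" using assms(3) by (simp add: sum.delta')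
  finally show ?thesis by (simp add: H_def)
qed

lemma cnj_F:
  assumes "i < d" "j < d"
  shows "cnj (dft_mat d $$ (i,j)) = cis (2 * pi * real i * real j / real d) / complex_of_real (sqrt (real d))"
  using assms by (simp add: F_entry cis_cnj)

lemma parity_ndvd:
  fixes i j1 j2 :: nat
  assumes "0 < i" "i < 2^L" "even j1" "odd j2"
  shows "\<not> int (2^L) dvd int i * (int j1 - int j2)"
proof
  assume a: "int (2^L) dvd int i * (int j1 - int j2)"
  have o: "odd (int j1 - int j2)" using assms(3,4) by simp
  have "coprime (2::int) (int j1 - int j2)" using o coprime_left_2_iff_odd by blast
  hence "coprime ((2::int)^L) (int j1 - int j2)" by (simp only: coprime_power_left_iff) simp
  moreover have eqi: "int (2^L) = (2::int)^L" by simp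
  ultimately have c: "coprime (int (2^L)) (int j1 - int j2)" by (simp only:)
  have "int (2^L) dvd int i" using a coprime_dvd_mult_left_iff[OF c] by blast
  hence "2^L dvd i" by (simp only: of_nat_dvd_iff)
  hence "2^L \<le> i" using assms(1) by (intro dvd_imp_le) auto
  thus False using assms(2) by simp
qed

lemma cis_parity_ne:
  fixes i j1 j2 :: nat
  assumes "0 < i" "i < 2^L" "even j1" "odd j2"
  shows "cis (2 * pi * real i * real j1 / real (2^L)) \<noteq> cis (2 * pi * real i * real j2 / real (2^L))"
proof
  assume e: "cis (2 * pi * real i * real j1 / real (2^L)) = cis (2 * pi * real i * real j2 / real (2^L))"
  have A: "cis (2 * pi * real i * real j1 / real (2^L) - 2 * pi * real i * real j2 / real (2^L)) = 1"
  proof -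
    have "cis (2 * pi * real i * real j1 / real (2^L)) / cis (2 * pi * real i * real j2 / real (2^L)) = 1"
      using e by simp
    thus ?thesis by (simp only: cis_divide)
  qed
  have B: "2 * pi * real i * real j1 / real (2^L) - 2 * pi * real i * real j2 / real (2^L)
      = 2 * pi * of_int (int i * (int j1 - int j2)) / real (2^L)"
    by (simp add: diff_divide_distrib[symmetric] right_diff_distrib mult.assoc)
  have "cis (2 * pi * of_int (int i * (int j1 - int j2)) / real (2^L)) = 1" using A unfolding B .
  hence "int (2^L) dvd int i * (int j1 - int j2)" by (rule cis_eq_1_dvd[rotated]) simp
  thus False using parity_ndvd[OF assms] by blast
qed




lemma sq_sq: "complex_of_real (sqrt (real d)) * complex_of_real (sqrt (real d)) = of_nat d"
  unfolding of_real_mult[symmetric] real_sqrt_mult_self by simp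

lemma X_nat_carrier: "X_nat d n \<in> carrier_mat d n" by (simp add: X_nat_def)

lemma F_row_sum:
  assumes d: "d > 0" and i: "i < d"
  shows "(\<Sum>l<d. dft_mat d $$ (i,l)) = (if i = 0 then complex_of_real (sqrt (real d)) else 0)"
proof -
  define sq where "sq = complex_of_real (sqrt (real d))"
  have "(\<Sum>l<d. dft_mat d $$ (i,l)) = (\<Sum>l<d. cis (2 * pi * real l * of_int (- int i) / real d) / sq)"
  proof (rule sum.cong[OF refl])
    fix l assume "l \<in> {..<d}"
    hence l: "l < d" by simp
    have a: "- 2 * pi * real i * real l / real d = 2 * pi * real l * of_int (- int i) / real d"
      by simp
    show "dft_mat d $$ (i,l) = cis (2 * pi * real l * of_int (- int i) / real d) / sq"
      by (simp only: F_entry[OF i l] a sq_def)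
  qed
  also have "\<dots> = (\<Sum>l<d. cis (2 * pi * real l * of_int (- int i) / real d)) / sq"
    by (simp add: sum_divide_distrib)
  also have "\<dots> = (if int d dvd (- int i) then of_nat d else 0) / sq"
    by (simp only: root_sum[OF d])
  also have "\<dots> = (if i = 0 then sq else 0)"
  proof (cases "i = 0")
    case True
    have "sq \<noteq> 0" using d by (simp add: sq_def)
    hence "of_nat d / sq = sq" using sq_sq[of d] by (simp add: sq_def field_simps)
    thus ?thesis using True by simp
  next
    case False
    have "\<not> int d dvd (- int i)"
    proof
      assume "int d dvd (- int i)"
      hence "int d dvd int i" by simp
      hence "d dvd i" by simp
      thus False using False i by (meson dvd_imp_le not_le neq0_conv)
    qed
    thus ?thesis using False by simp
  qed
  finally show ?thesis by (simp add: sq_def)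
qed

lemma FX_nat:
  assumes d: "d > 0" and i: "i < d" and t: "t < n"
  shows "(dft_mat d * X_nat d n) $$ (i,t) = (if i = 0 \<and> t = 0 then complex_of_real (sqrt (real d)) else 0)"
proof -
  have "(dft_mat d * X_nat d n) $$ (i,t) = (\<Sum>l<d. dft_mat d $$ (i,l) * (if t = 0 then 1 else 0))"
    using i t by (simp add: X_nat_def dft_mat_def scalar_prod_def atLeast0LessThan)
  also have "\<dots> = (if t = 0 then (\<Sum>l<d. dft_mat d $$ (i,l)) else 0)" by simp
  also have "\<dots> = (if t = 0 then (if i = 0 then complex_of_real (sqrt (real d)) else 0) else 0)"
    by (simp only: F_row_sum[OF d i])
  finally show ?thesis by simp
qed

lemma obj_X_nat:
  assumes d: "d > 0" and "n1 + n2 = n + 1" "n1 > 0" "n2 > 0"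
  shows "hankel_obj d n1 n2 (X_nat d n) = sqrt (real d)"
proof -
  have "hankel_obj d n1 n2 (X_nat d n) = (\<Sum>i<d. cmod ((dft_mat d * X_nat d n) $$ (i,0)))"
    unfolding hankel_obj_def
  proof (rule sum.cong[OF refl])
    fix i assume "i \<in> {..<d}"
    hence i: "i < d" by simp
    show "nuclear_norm (hankel n1 n2 (\<lambda>k. (dft_mat d * X_nat d n) $$ (i,k)))
        = cmod ((dft_mat d * X_nat d n) $$ (i,0))"
      by (rule hank_nuc_single[OF assms(2,3,4)]) (simp add: FX_nat[OF d i])
  qed
  also have "\<dots> = (\<Sum>i<d. if i = 0 then sqrt (real d) else 0)"
    using assms by (intro sum.cong refl) (auto simp: FX_nat)
  also have "\<dots> = sqrt (real d)" using d by (simp add: sum.delta')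
  finally show ?thesis .
qed

lemma Y_recover:
  assumes d: "d > 0" and Y: "Y \<in> carrier_mat d n" and j: "j < d" and t: "t < n"
  shows "Y $$ (j,t) = (\<Sum>i<d. cnj (dft_mat d $$ (i,j)) * (dft_mat d * Y) $$ (i,t))"
proof -
  have FH: "conj_transpose (dft_mat d) \<in> carrier_mat d d" by (simp add: conj_transpose_def dft_mat_def)
  have "Y = 1\<^sub>m d * Y" using Y by simp
  also have "\<dots> = (conj_transpose (dft_mat d) * dft_mat d) * Y" by (simp add: F_unitary[OF d])
  also have "\<dots> = conj_transpose (dft_mat d) * (dft_mat d * Y)"
    using assoc_mult_mat[OF FH F_carrier Y] .
  finally have "Y $$ (j,t) = (conj_transpose (dft_mat d) * (dft_mat d * Y)) $$ (j,t)" by simp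
  also have "\<dots> = (\<Sum>i<d. cnj (dft_mat d $$ (i,j)) * (dft_mat d * Y) $$ (i,t))"
    using j t Y by (simp add: conj_transpose_def dft_mat_def scalar_prod_def atLeast0LessThan)
  finally show ?thesis .
qed

lemma cmod_F:
  assumes "i < d" "j < d"
  shows "cmod (dft_mat d $$ (i,j)) = 1 / sqrt (real d)"
  using assms by (simp add: F_entry norm_divide)




lemma triangle_eq:
  fixes a :: "nat \<Rightarrow> complex"
  assumes S: "finite S" and sa: "(\<Sum>i\<in>S. a i) = complex_of_real s"
    and le: "(\<Sum>i\<in>S. cmod (a i)) \<le> s" and i: "i \<in> S"
  shows "a i = complex_of_real (cmod (a i))"
proof -
  have r: "(\<Sum>i\<in>S. Re (a i)) = s"
  proof -
    have "Re (\<Sum>i\<in>S. a i) = s" unfolding sa by (rule Re_complex_of_real)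
    thus ?thesis by (simp only: Re_sum)
  qed
  have d: "(\<Sum>i\<in>S. cmod (a i) - Re (a i)) = (\<Sum>i\<in>S. cmod (a i)) - (\<Sum>i\<in>S. Re (a i))"
    by (rule sum_subtractf)
  have nn: "\<forall>i\<in>S. 0 \<le> cmod (a i) - Re (a i)"
  proof
    fix i show "0 \<le> cmod (a i) - Re (a i)" using complex_Re_le_cmod[of "a i"] by linarith
  qed
  have "0 \<le> (\<Sum>i\<in>S. cmod (a i) - Re (a i))" using nn by (intro sum_nonneg) blast
  hence z0: "(\<Sum>i\<in>S. cmod (a i) - Re (a i)) = 0" using d r le by linarith
  have nn': "\<And>x. x \<in> S \<Longrightarrow> 0 \<le> cmod (a x) - Re (a x)" using nn by blast
  have "\<forall>x\<in>S. cmod (a x) - Re (a x) = 0" using iffD1[OF sum_nonneg_eq_0_iff[OF S nn'] z0] .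
  hence "cmod (a i) - Re (a i) = 0" using i by blast
  hence e: "cmod (a i) = Re (a i)" by linarith
  have "Re (a i) \<ge> 0" using e norm_ge_zero[of "a i"] by linarith
  hence "\<bar>Re (a i)\<bar> = cmod (a i)" using e by linarith
  hence im: "Im (a i) = 0" by (rule Im_eq_0)
  show ?thesis unfolding complex_eq_iff using e im by simp
qed

context
  fixes d n n1 n2 :: nat and Y :: "complex mat"
  assumes d: "d > 0" and Y: "Y \<in> carrier_mat d n"
    and nn: "n1 + n2 = n + 1" "n1 > 0" "n2 > 0"
begin

definition "Zm = dft_mat d * Y"
definition "Hk i = hankel n1 n2 (\<lambda>k. Zm $$ (i,k))"

lemma obj_eq: "hankel_obj d n1 n2 Y = (\<Sum>i<d. nuclear_norm (Hk i))"
  by (simp add: hankel_obj_def Hk_def Zm_def)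

lemma chain_c: "(\<Sum>i<d. cmod (Zm $$ (i,0))) \<le> (\<Sum>i<d. sqrt (fsq n1 n2 (Hk i)))"
  unfolding Hk_def by (intro sum_mono hank_frob_ge[OF nn(2,3), of "\<lambda>k. Zm $$ (_,k)", simplified])

lemma chain_f: "(\<Sum>i<d. sqrt (fsq n1 n2 (Hk i))) \<le> hankel_obj d n1 n2 Y"
  unfolding obj_eq Hk_def by (intro sum_mono nuc_ge_frob hankel_carrier)

lemma cisZ:
  assumes j: "j < d"
  shows "(\<Sum>i<d. cis (2 * pi * real i * real j / real d) * Zm $$ (i,0))
       = complex_of_real (sqrt (real d)) * Y $$ (j,0)"
proof -
  define sq where "sq = complex_of_real (sqrt (real d))"
  have sq0: "sq \<noteq> 0" using d by (simp add: sq_def)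
  have "Y $$ (j,0) = (\<Sum>i<d. cnj (dft_mat d $$ (i,j)) * Zm $$ (i,0))"
    unfolding Zm_def using Y_recover[OF d Y j] nn by simp
  also have "\<dots> = (\<Sum>i<d. cis (2 * pi * real i * real j / real d) * Zm $$ (i,0)) / sq"
    unfolding sum_divide_distrib
    by (rule sum.cong[OF refl]) (simp add: cnj_F j sq_def)
  finally have "Y $$ (j,0) = (\<Sum>i<d. cis (2 * pi * real i * real j / real d) * Zm $$ (i,0)) / sq" .
  hence "Y $$ (j,0) * sq = (\<Sum>i<d. cis (2 * pi * real i * real j / real d) * Zm $$ (i,0))"
    using sq0 by (simp only: eq_divide_eq if_True not_False_eq_True)
  thus ?thesis unfolding sq_def by (simp only: mult.commute)
qed

lemma chain_a:
  assumes j: "j < d" and Yj: "Y $$ (j,0) = 1"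
  shows "sqrt (real d) \<le> (\<Sum>i<d. cmod (Zm $$ (i,0)))"
proof -
  have "sqrt (real d) = cmod (\<Sum>i<d. cis (2 * pi * real i * real j / real d) * Zm $$ (i,0))"
    using cisZ[OF j] Yj by simp
  also have "\<dots> \<le> (\<Sum>i<d. cmod (cis (2 * pi * real i * real j / real d) * Zm $$ (i,0)))"
    by (rule norm_sum)
  also have "\<dots> = (\<Sum>i<d. cmod (Zm $$ (i,0)))" by (simp add: norm_mult)
  finally show ?thesis .
qed

lemma lower_bound:
  assumes j: "j < d" and Yj: "Y $$ (j,0) = 1"
  shows "sqrt (real d) \<le> hankel_obj d n1 n2 Y"
  using chain_a[OF j Yj] chain_c chain_f by linarith


lemma uniq:
  assumes dL: "d = 2^L" and j1: "j1 < d" and j2: "j2 < d" and ev: "even j1" and od: "odd j2"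
    and Y1: "Y $$ (j1,0) = 1" and Y2: "Y $$ (j2,0) = 1"
    and opt: "hankel_obj d n1 n2 Y \<le> sqrt (real d)"
  shows "Y = X_nat d n"
proof -
  define c where "c i = cmod (Zm $$ (i,0))" for i
  define f where "f i = sqrt (fsq n1 n2 (Hk i))" for i
  have ca: "sqrt (real d) \<le> (\<Sum>i<d. c i)" using chain_a[OF j1 Y1] by (simp add: c_def)
  have cf: "(\<Sum>i<d. c i) \<le> (\<Sum>i<d. f i)" using chain_c by (simp add: c_def f_def)
  have fo: "(\<Sum>i<d. f i) \<le> sqrt (real d)" using chain_f opt by (simp add: f_def)
  have cle: "c i \<le> f i" for i
    unfolding c_def f_def Hk_def by (rule hank_frob_ge[OF nn(2,3), of "\<lambda>k. Zm $$ (i,k)", simplified])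
  have sc: "(\<Sum>i<d. c i) = sqrt (real d)" using ca cf fo by linarith
  have "(\<Sum>i<d. f i - c i) = 0" using ca cf fo by (simp add: sum_subtractf)
  moreover have nn': "\<And>i. i \<in> {..<d} \<Longrightarrow> 0 \<le> f i - c i" using cle by (simp add: le_diff_eq)
  ultimately have "\<forall>i\<in>{..<d}. f i - c i = 0" using sum_nonneg_eq_0_iff[of "{..<d}", OF _ nn'] by simp
  hence fc: "f i = c i" if "i < d" for i using that by simp
  define a where "a j i = cis (2 * pi * real i * real j / real d) * Zm $$ (i,0)" for j i
  have areal: "a j i = complex_of_real (c i)" if "j < d" "Y $$ (j,0) = 1" "i < d" for j i
  proof -
    have "(\<Sum>i<d. a j i) = complex_of_real (sqrt (real d))"
      using cisZ[OF that(1)] that(2) by (simp add: a_def)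
    moreover have "(\<Sum>i<d. cmod (a j i)) \<le> sqrt (real d)"
      using sc by (simp add: a_def c_def norm_mult)
    ultimately have "a j i = complex_of_real (cmod (a j i))"
      using that(3) by (intro triangle_eq[of "{..<d}"]) auto
    thus ?thesis by (simp add: a_def c_def norm_mult)
  qed
  have Z0: "Zm $$ (i,0) = 0" if "0 < i" "i < d" for i
  proof (rule ccontr)
    assume nz: "Zm $$ (i,0) \<noteq> 0"
    have "a j1 i = a j2 i" using areal[OF j1 Y1 that(2)] areal[OF j2 Y2 that(2)] by simp
    hence "cis (2 * pi * real i * real j1 / real d) = cis (2 * pi * real i * real j2 / real d)"
      using nz by (simp add: a_def)
    thus False using cis_parity_ne[of i L j1 j2] that ev od dL by simp
  qed
  have Z00: "Zm $$ (0,0) = complex_of_real (sqrt (real d))"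
  proof -
    have "(\<Sum>i<d. a j1 i) = complex_of_real (sqrt (real d))"
      using cisZ[OF j1] Y1 by (simp add: a_def)
    moreover have "(\<Sum>i<d. a j1 i) = a j1 0"
    proof -
      have "(\<Sum>i<d. a j1 i) = (\<Sum>i<d. if i = 0 then a j1 0 else 0)"
        by (rule sum.cong[OF refl]) (auto simp: a_def Z0)
      also have "\<dots> = a j1 0" using d by (simp add: sum.delta')
      finally show ?thesis .
    qed
    ultimately show ?thesis by (simp add: a_def)
  qed
  have Zt: "Zm $$ (i,t) = 0" if "i < d" "0 < t" "t < n" for i t
  proof -
    have "sqrt (fsq n1 n2 (hankel n1 n2 (\<lambda>k. Zm $$ (i,k)))) = cmod (Zm $$ (i,0))"
      using fc[OF that(1)] by (simp add: f_def c_def Hk_def)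
    from hank_frob_eq[OF nn(2) nn(3) nn(1) this that(2,3)] show ?thesis .
  qed
  have ZX: "Zm = dft_mat d * X_nat d n"
  proof (rule eq_matI)
    show "dim_row Zm = dim_row (dft_mat d * X_nat d n)" by (simp add: Zm_def dft_mat_def X_nat_def)
    show "dim_col Zm = dim_col (dft_mat d * X_nat d n)" using Y by (simp add: Zm_def X_nat_def)
    fix i t assume "i < dim_row (dft_mat d * X_nat d n)" "t < dim_col (dft_mat d * X_nat d n)"
    hence it: "i < d" "t < n" by (auto simp: dft_mat_def X_nat_def)
    show "Zm $$ (i,t) = (dft_mat d * X_nat d n) $$ (i,t)"
      unfolding FX_nat[OF d it]
    proof (cases "t = 0")
      case True
      thus "Zm $$ (i,t) = (if i = 0 \<and> t = 0 then complex_of_real (sqrt (real d)) else 0)"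
        using Z00 Z0[of i] it by (cases "i = 0") auto
    next
      case False
      thus "Zm $$ (i,t) = (if i = 0 \<and> t = 0 then complex_of_real (sqrt (real d)) else 0)"
        using Zt[of i t] it by simp
    qed
  qed
  show ?thesis
  proof (rule eq_matI)
    show "dim_row Y = dim_row (X_nat d n)" "dim_col Y = dim_col (X_nat d n)"
      using Y by (auto simp: X_nat_def)
    fix j t assume "j < dim_row (X_nat d n)" "t < dim_col (X_nat d n)"
    hence jt: "j < d" "t < n" by (auto simp: X_nat_def)
    have "Y $$ (j,t) = (\<Sum>i<d. cnj (dft_mat d $$ (i,j)) * Zm $$ (i,t))"
      unfolding Zm_def by (rule Y_recover[OF d Y jt])
    also have "\<dots> = X_nat d n $$ (j,t)"
      unfolding ZX by (rule Y_recover[OF d X_nat_carrier jt, symmetric])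
    finally show "Y $$ (j,t) = X_nat d n $$ (j,t)" .
  qed
qed

end




definition wt :: "real \<Rightarrow> 'a set \<Rightarrow> 'a set \<Rightarrow> real" where
  "wt p U A = p ^ card A * (1 - p) ^ (card U - card A)"

lemma wt_total:
  assumes U: "finite U"
  shows "(\<Sum>A | A \<subseteq> U. wt p U A) = 1"
proof -
  have "(\<Prod>x\<in>U. p + (1 - p)) = (\<Sum>X\<in>Pow U. (\<Prod>x\<in>X. p) * (\<Prod>x\<in>U-X. (1 - p)))"
    by (rule prod_add[OF U])
  also have "\<dots> = (\<Sum>X\<in>Pow U. wt p U X)"
  proof (rule sum.cong[OF refl])
    fix X assume "X \<in> Pow U"
    hence X: "X \<subseteq> U" by simp
    hence "finite X" using U finite_subset by blast
    thus "(\<Prod>x\<in>X. p) * (\<Prod>x\<in>U-X. (1 - p)) = wt p U X"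
      using X U by (simp add: wt_def card_Diff_subset)
  qed
  finally have "(\<Sum>X\<in>Pow U. wt p U X) = 1" by simp
  moreover have "Pow U = {A. A \<subseteq> U}" by auto
  ultimately show ?thesis by simp
qed

lemma wt_nonempty:
  assumes U: "finite U"
  shows "(\<Sum>A | A \<subseteq> U \<and> A \<noteq> {}. wt p U A) = 1 - (1 - p) ^ card U"
proof -
  have eq: "{A. A \<subseteq> U} = insert {} {A. A \<subseteq> U \<and> A \<noteq> {}}" by auto
  have fin: "finite {A. A \<subseteq> U \<and> A \<noteq> {}}"
    by (rule finite_subset[of _ "Pow U"]) (use U in auto)
  have "1 = (\<Sum>A | A \<subseteq> U. wt p U A)" using wt_total[OF U] by simp
  also have "\<dots> = wt p U {} + (\<Sum>A | A \<subseteq> U \<and> A \<noteq> {}. wt p U A)"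
    unfolding eq by (rule sum.insert[OF fin]) simp
  finally show ?thesis by (simp add: wt_def)
qed

lemma split_sum:
  assumes U: "finite U" and V: "finite V" and UV: "U \<inter> V = {}"
  shows "(\<Sum>W | W \<subseteq> U \<union> V \<and> P (W \<inter> U) \<and> R (W \<inter> V). wt p (U \<union> V) W)
       = (\<Sum>A | A \<subseteq> U \<and> P A. wt p U A) * (\<Sum>B | B \<subseteq> V \<and> R B. wt p V B)"
proof -
  define SA where "SA = {A. A \<subseteq> U \<and> P A}"
  define SB where "SB = {B. B \<subseteq> V \<and> R B}"
  define SW where "SW = {W. W \<subseteq> U \<union> V \<and> P (W \<inter> U) \<and> R (W \<inter> V)}"
  have bij: "bij_betw (\<lambda>(A,B). A \<union> B) (SA \<times> SB) SW"
  proof (rule bij_betwI[where g = "\<lambda>W. (W \<inter> U, W \<inter> V)"])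
    show "(\<lambda>(A,B). A \<union> B) \<in> SA \<times> SB \<rightarrow> SW"
    proof
      fix x assume "x \<in> SA \<times> SB"
      then obtain A B where x: "x = (A,B)" "A \<subseteq> U" "P A" "B \<subseteq> V" "R B"
        by (auto simp: SA_def SB_def)
      have "(A \<union> B) \<inter> U = A" "(A \<union> B) \<inter> V = B" using x UV by auto
      thus "(case x of (A,B) \<Rightarrow> A \<union> B) \<in> SW" using x by (auto simp: SW_def)
    qed
    show "(\<lambda>W. (W \<inter> U, W \<inter> V)) \<in> SW \<rightarrow> SA \<times> SB" by (auto simp: SW_def SA_def SB_def)
    show "(\<lambda>W. (W \<inter> U, W \<inter> V)) ((\<lambda>(A,B). A \<union> B) x) = x" if "x \<in> SA \<times> SB" for x
      using that UV by (auto simp: SA_def SB_def)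
    show "(\<lambda>(A,B). A \<union> B) ((\<lambda>W. (W \<inter> U, W \<inter> V)) y) = y" if "y \<in> SW" for y
      using that by (auto simp: SW_def)
  qed
  have w: "wt p (U \<union> V) (A \<union> B) = wt p U A * wt p V B" if "(A,B) \<in> SA \<times> SB" for A B
  proof -
    have A: "A \<subseteq> U" and B: "B \<subseteq> V" using that by (auto simp: SA_def SB_def)
    have fA: "finite A" using A U finite_subset by blast
    have fB: "finite B" using B V finite_subset by blast
    have cAB: "card (A \<union> B) = card A + card B"
      using card_Un_disjoint[OF fA fB] A B UV by auto
    have cUV: "card (U \<union> V) = card U + card V" using card_Un_disjoint[OF U V UV] .
    have le: "card A \<le> card U" "card B \<le> card V" using card_mono[OF U A] card_mono[OF V B] by auto
    have "card (U \<union> V) - card (A \<union> B) = (card U - card A) + (card V - card B)"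
      using cAB cUV le by simp
    thus ?thesis unfolding wt_def cAB by (simp add: power_add mult_ac)
  qed
  have "(\<Sum>W\<in>SW. wt p (U \<union> V) W) = (\<Sum>x\<in>SA \<times> SB. wt p (U \<union> V) ((\<lambda>(A,B). A \<union> B) x))"
    by (rule sum.reindex_bij_betw[OF bij, symmetric])
  also have "\<dots> = (\<Sum>x\<in>SA \<times> SB. wt p U (fst x) * wt p V (snd x))"
    by (rule sum.cong[OF refl]) (use w in auto)
  also have "\<dots> = (\<Sum>A\<in>SA. wt p U A) * (\<Sum>B\<in>SB. wt p V B)"
    by (simp add: sum_product sum.cartesian_product case_prod_unfold)
  finally show ?thesis by (simp add: SW_def SA_def SB_def)
qed




lemma choose_step: "Suc k * (n choose Suc k) = (n - k) * (n choose k)"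
  using binomial_absorption[of k n] binomial_absorb_comp[of n k] by simp

lemma choose_double: "2 ^ k * (h choose k) \<le> (2 * h) choose k"
proof (induction k)
  case 0 then show ?case by simp
next
  case (Suc k)
  have "Suc k * (2 ^ Suc k * (h choose Suc k)) = 2 * 2^k * (Suc k * (h choose Suc k))"
    by (simp only: power_Suc mult_ac)
  also have "\<dots> = 2 * 2^k * ((h - k) * (h choose k))" by (simp only: choose_step)
  also have "\<dots> = 2 * (h - k) * (2 ^ k * (h choose k))" by (simp add: mult_ac)
  also have "\<dots> \<le> (2 * h - k) * ((2 * h) choose k)"
  proof (rule mult_le_mono)
    show "2 * (h - k) \<le> 2 * h - k" by simp
    show "2 ^ k * (h choose k) \<le> (2 * h) choose k" by (rule Suc.IH)
  qed
  also have "\<dots> = Suc k * ((2 * h) choose Suc k)" using choose_step[of k "2*h"] by simp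
  finally show ?case by (simp only: mult_le_cancel1)
qed

lemma choose_4:
  assumes "2 \<le> k" shows "4 * (h choose k) \<le> (2 * h) choose k"
proof -
  have "(4::nat) = 2^2" by simp
  also have "\<dots> \<le> 2 ^ k" using assms by (intro power_increasing) auto
  finally have "4 * (h choose k) \<le> 2 ^ k * (h choose k)" by simp
  also have "\<dots> \<le> (2 * h) choose k" by (rule choose_double)
  finally show ?thesis .
qed

lemma sum_split01:
  fixes f :: "nat \<Rightarrow> real" assumes "1 \<le> m"
  shows "(\<Sum>k\<le>m. f k) = f 0 + f 1 + (\<Sum>k\<in>{2..m}. f k)"
proof -
  have "{..m} = insert 0 (insert 1 {2..m})" using assms by auto
  thus ?thesis by simp
qed

lemma lin_aux: "0 \<le> 1 - 4 * a + 3 * b + c \<Longrightarrow> (1 - b - c) / 2 \<le> 1 - 2 * a + (b::real)"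
  by (simp add: field_simps)

lemma prob_ineq:
  fixes p :: real and h :: nat
  assumes p: "0 < p" "p \<le> 1" and h: "1 \<le> h"
  shows "(1 - (1-p)^(2*h) - real (2*h) * p * (1-p)^(2*h-1)) / 2 \<le> (1 - (1-p)^h)^2"
proof -
  define q where "q = 1 - p"
  define t where "t k = p ^ k * q ^ (2*h - k)" for k
  have S1: "(\<Sum>k\<le>2*h. real ((2*h) choose k) * t k) = 1"
  proof -
    have "(p + q) ^ (2*h) = (\<Sum>k\<le>2*h. real ((2*h) choose k) * p ^ k * q ^ (2*h - k))"
      by (rule binomial_ring)
    thus ?thesis by (simp add: q_def t_def mult.assoc)
  qed
  have S2: "(\<Sum>k\<le>2*h. real (h choose k) * t k) = q ^ h"
  proof -
    have "(p + q) ^ h = (\<Sum>k\<le>h. real (h choose k) * p ^ k * q ^ (h - k))"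
      by (rule binomial_ring)
    hence "q ^ h = (\<Sum>k\<le>h. real (h choose k) * p ^ k * q ^ (h - k)) * q ^ h"
      by (simp add: q_def)
    also have "\<dots> = (\<Sum>k\<le>h. real (h choose k) * t k)"
      unfolding sum_distrib_right
    proof (rule sum.cong[OF refl])
      fix k assume "k \<in> {..h}"
      hence "k \<le> h" by simp
      hence "q ^ (h - k) * q ^ h = q ^ (2*h - k)" by (simp add: mult_2 flip: power_add)
      thus "real (h choose k) * p ^ k * q ^ (h - k) * q ^ h = real (h choose k) * t k"
        by (simp add: t_def mult.assoc)
    qed
    also have "\<dots> = (\<Sum>k\<le>2*h. real (h choose k) * t k)"
      by (rule sum.mono_neutral_left) (auto simp: binomial_eq_0)
    finally show ?thesis by simp
  qed
  have t0: "t 0 = q ^ (2*h)" by (simp add: t_def)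
  have t1: "t 1 = p * q ^ (2*h - 1)" by (simp add: t_def)
  define e where "e k = (real ((2*h) choose k) - 4 * real (h choose k)) * t k" for k
  have E: "(\<Sum>k\<le>2*h. e k) = 1 - 4 * q ^ h"
  proof -
    have "(\<Sum>k\<le>2*h. e k) = (\<Sum>k\<le>2*h. real ((2*h) choose k) * t k) - 4 * (\<Sum>k\<le>2*h. real (h choose k) * t k)"
      unfolding e_def by (simp add: left_diff_distrib sum_subtractf sum_distrib_left mult.assoc)
    thus ?thesis using S1 S2 by simp
  qed
  have e0: "e 0 = - 3 * q ^ (2*h)" by (simp add: e_def t0)
  have e1: "e 1 = - real (2*h) * p * q ^ (2*h - 1)" unfolding e_def t1 by (simp add: algebra_simps)
  have e2: "0 \<le> (\<Sum>k\<in>{2..2*h}. e k)"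
  proof (rule sum_nonneg)
    fix k assume "k \<in> {2..2*h}"
    hence "4 * (h choose k) \<le> (2*h) choose k" by (intro choose_4) auto
    hence "4 * real (h choose k) \<le> real ((2*h) choose k)" by (simp flip: of_nat_le_iff)
    moreover have "0 \<le> t k" using p by (simp add: t_def q_def)
    ultimately show "0 \<le> e k" by (simp add: e_def)
  qed
  have "(\<Sum>k\<le>2*h. e k) = e 0 + e 1 + (\<Sum>k\<in>{2..2*h}. e k)"
    by (rule sum_split01) (use h in simp)
  hence main: "1 - 4 * q ^ h + 3 * q ^ (2*h) + real (2*h) * p * q ^ (2*h - 1) \<ge> 0"
    using E e0 e1 e2 by linarith
  have sq: "(1 - q ^ h)^2 = 1 - 2 * q ^ h + q ^ (2*h)"
    by (simp add: power2_diff power_mult_distrib mult.commute power_mult)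
  show ?thesis unfolding q_def[symmetric] sq by (rule lin_aux[OF main])
qed




lemma P_entry:
  assumes "Y \<in> carrier_mat d n" "(j,0) \<in> \<Omega>" "j < d" "0 < n"
  shows "P_Omega \<Omega> Y $$ (j,0) = Y $$ (j,0)"
  using assms by (simp add: P_Omega_def)

lemma unique_sol:
  assumes dL: "d = 2^L" and nn: "n1 + n2 = n + 1" "n1 > 0" "n2 > 0"
    and j1: "j1 < d" and j2: "j2 < d" and ev: "even j1" and od: "odd j2"
    and o1: "(j1,0) \<in> \<Omega>" and o2: "(j2,0) \<in> \<Omega>"
  shows "unique_solution d n n1 n2 \<Omega> (X_nat d n)"
proof -
  have d: "d > 0" using dL by simp
  have n0: "0 < n" using nn by linarith
  have PY: "Y $$ (j,0) = 1"
    if Y: "Y \<in> carrier_mat d n" and P: "P_Omega \<Omega> Y = P_Omega \<Omega> (X_nat d n)"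
      and o: "(j,0) \<in> \<Omega>" and j: "j < d" for Y j
  proof -
    have "Y $$ (j,0) = P_Omega \<Omega> Y $$ (j,0)" using P_entry[OF Y o j n0] by simp
    also have "\<dots> = P_Omega \<Omega> (X_nat d n) $$ (j,0)" using P by simp
    also have "\<dots> = X_nat d n $$ (j,0)" using P_entry[OF X_nat_carrier o j n0] .
    also have "\<dots> = 1" using j n0 by (simp add: X_nat_def)
    finally show ?thesis .
  qed
  have objX: "hankel_obj d n1 n2 (X_nat d n) = sqrt (real d)"
    by (rule obj_X_nat[OF d nn])
  show ?thesis unfolding unique_solution_def
  proof (intro equalityI subsetI)
    fix X assume "X \<in> {X \<in> carrier_mat d n. P_Omega \<Omega> X = P_Omega \<Omega> (X_nat d n) \<and>
        (\<forall>Y\<in>carrier_mat d n. P_Omega \<Omega> Y = P_Omega \<Omega> (X_nat d n) \<longrightarrow>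
            hankel_obj d n1 n2 X \<le> hankel_obj d n1 n2 Y)}"
    hence X: "X \<in> carrier_mat d n" and PX: "P_Omega \<Omega> X = P_Omega \<Omega> (X_nat d n)"
      and mn: "\<forall>Y\<in>carrier_mat d n. P_Omega \<Omega> Y = P_Omega \<Omega> (X_nat d n) \<longrightarrow>
            hankel_obj d n1 n2 X \<le> hankel_obj d n1 n2 Y" by auto
    have opt: "hankel_obj d n1 n2 X \<le> sqrt (real d)"
      using mn X_nat_carrier objX by auto
    have "X = X_nat d n"
      by (rule uniq[OF d X nn(1) nn(2) nn(3) dL j1 j2 ev od PY[OF X PX o1 j1] PY[OF X PX o2 j2] opt])
    thus "X \<in> {X_nat d n}" by simp
  next
    fix X assume "X \<in> {X_nat d n}"
    hence X: "X = X_nat d n" by simp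
    have "\<forall>Y\<in>carrier_mat d n. P_Omega \<Omega> Y = P_Omega \<Omega> (X_nat d n) \<longrightarrow>
            hankel_obj d n1 n2 (X_nat d n) \<le> hankel_obj d n1 n2 Y"
    proof (intro ballI impI)
      fix Y assume Y: "Y \<in> carrier_mat d n" and P: "P_Omega \<Omega> Y = P_Omega \<Omega> (X_nat d n)"
      show "hankel_obj d n1 n2 (X_nat d n) \<le> hankel_obj d n1 n2 Y"
        unfolding objX by (rule lower_bound[OF d Y nn(1) nn(2) nn(3) j1 PY[OF Y P o1 j1]])
    qed
    thus "X \<in> {X \<in> carrier_mat d n. P_Omega \<Omega> X = P_Omega \<Omega> (X_nat d n) \<and>
        (\<forall>Y\<in>carrier_mat d n. P_Omega \<Omega> Y = P_Omega \<Omega> (X_nat d n) \<longrightarrow>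
            hankel_obj d n1 n2 X \<le> hankel_obj d n1 n2 Y)}"
      using X X_nat_carrier by simp
  qed
qed

lemma evens_eq: "{j::nat. j < 2*h \<and> even j} = (\<lambda>k. 2*k) ` {..<h}"
  by (auto elim!: evenE)

lemma odds_eq: "{j::nat. j < 2*h \<and> odd j} = (\<lambda>k. 2*k+1) ` {..<h}"
  by (auto elim!: oddE)

lemma card_evens: "card {j::nat. j < 2*h \<and> even j} = h"
  unfolding evens_eq by (subst card_image) (auto simp: inj_on_def)

lemma card_odds: "card {j::nat. j < 2*h \<and> odd j} = h"
  unfolding odds_eq by (subst card_image) (auto simp: inj_on_def)




lemma bern_Ev:
  fixes p :: real
  assumes dh: "d = 2 * h" and n0: "0 < n"
  shows "bernoulli_prob d n p (\<lambda>\<Omega>. \<Omega> \<inter> ((\<lambda>j. (j, 0::nat)) ` {j. j < d \<and> even j}) \<noteq> {}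
            \<and> \<Omega> \<inter> ((\<lambda>j. (j, 0::nat)) ` {j. j < d \<and> odd j}) \<noteq> {}) = (1 - (1 - p) ^ h)\<^sup>2"
proof -
  define E0 where "E0 = (\<lambda>j. (j, 0::nat)) ` {j. j < d \<and> even j}"
  define O0 where "O0 = (\<lambda>j. (j, 0::nat)) ` {j. j < d \<and> odd j}"
  define W where "W = {0..<d} \<times> {0..<n}"
  define R where "R = W - (E0 \<union> O0)"
  define Pp where "Pp A = (A \<inter> E0 \<noteq> {} \<and> A \<inter> O0 \<noteq> {})" for A :: "(nat \<times> nat) set"
  have fW: "finite W" by (simp add: W_def)
  have sub: "E0 \<union> O0 \<subseteq> W" using n0 by (auto simp: E0_def O0_def W_def)
  have fE: "finite E0" "finite O0" using sub fW finite_subset by blast+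
  have fR: "finite R" using fW by (simp add: R_def)
  have WR: "W = (E0 \<union> O0) \<union> R" using sub by (auto simp: R_def)
  have dis1: "E0 \<inter> O0 = {}" by (auto simp: E0_def O0_def)
  have dis2: "(E0 \<union> O0) \<inter> R = {}" by (auto simp: R_def)
  have cW: "card W = d * n" by (simp add: W_def)
  have cE: "card E0 = h"
  proof -
    have "card E0 = card {j. j < d \<and> even j}" unfolding E0_def by (rule card_image) (auto simp: inj_on_def)
    thus ?thesis using card_evens[of h] dh by simp
  qed
  have cO: "card O0 = h"
  proof -
    have "card O0 = card {j. j < d \<and> odd j}" unfolding O0_def by (rule card_image) (auto simp: inj_on_def)
    thus ?thesis using card_odds[of h] dh by simp
  qed
  have "bernoulli_prob d n p (\<lambda>\<Omega>. \<Omega> \<inter> E0 \<noteq> {} \<and> \<Omega> \<inter> O0 \<noteq> {})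
      = (\<Sum>\<Omega> | \<Omega> \<subseteq> W \<and> Pp \<Omega>. wt p W \<Omega>)"
    unfolding bernoulli_prob_def wt_def cW W_def Pp_def by simp
  also have "{\<Omega>. \<Omega> \<subseteq> W \<and> Pp \<Omega>} = {\<Omega>. \<Omega> \<subseteq> (E0 \<union> O0) \<union> R \<and> Pp (\<Omega> \<inter> (E0 \<union> O0)) \<and> True}"
    unfolding WR Pp_def by auto
  also have "(\<Sum>\<Omega>\<in>\<dots>. wt p W \<Omega>) = (\<Sum>\<Omega>\<in>\<dots>. wt p ((E0 \<union> O0) \<union> R) \<Omega>)" using WR by simp
  also have "\<dots> = (\<Sum>A | A \<subseteq> E0 \<union> O0 \<and> Pp A. wt p (E0 \<union> O0) A) * (\<Sum>B | B \<subseteq> R \<and> True. wt p R B)"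
    by (rule split_sum[OF _ fR dis2]) (use fE in simp)
  also have "(\<Sum>B | B \<subseteq> R \<and> True. wt p R B) = 1" using wt_total[OF fR] by simp
  also have "(\<Sum>A | A \<subseteq> E0 \<union> O0 \<and> Pp A. wt p (E0 \<union> O0) A)
      = (\<Sum>A | A \<subseteq> E0 \<union> O0 \<and> A \<inter> E0 \<noteq> {} \<and> A \<inter> O0 \<noteq> {}. wt p (E0 \<union> O0) A)"
    by (simp only: Pp_def)
  also have "\<dots> = (\<Sum>A | A \<subseteq> E0 \<and> A \<noteq> {}. wt p E0 A) * (\<Sum>B | B \<subseteq> O0 \<and> B \<noteq> {}. wt p O0 B)"
    by (rule split_sum[OF fE dis1])
  also have "\<dots> = (1 - (1 - p) ^ h) * (1 - (1 - p) ^ h)"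
    using wt_nonempty[OF fE(1)] wt_nonempty[OF fE(2)] cE cO by simp
  finally show ?thesis by (simp add: E0_def O0_def power2_eq_square)
qed




lemma limit_part:
  fixes p :: real assumes p: "0 < p" "p \<le> 1"
  shows "(\<lambda>m::nat. (1 - (1 - p) ^ m - real m * p * (1 - p) ^ (m - 1)) / 2) \<longlonglongrightarrow> 1 / 2"
proof -
  define q where "q = 1 - p"
  have nq: "norm q < 1" using p by (simp add: q_def)
  have a: "(\<lambda>m. q ^ m) \<longlonglongrightarrow> 0" by (rule LIMSEQ_power_zero[OF nq])
  have b: "(\<lambda>m::nat. real m * p * q ^ (m - 1)) \<longlonglongrightarrow> 0"
  proof (rule LIMSEQ_offset[where k = 1])
    have "(\<lambda>m. p * (of_nat m * q ^ m + q ^ m)) \<longlonglongrightarrow> p * (0 + 0)"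
      by (intro tendsto_intros powser_times_n_limit_0[OF nq] a)
    moreover have "(\<lambda>m. p * (of_nat m * q ^ m + q ^ m)) = (\<lambda>m. real (m + 1) * p * q ^ (m + 1 - 1))"
      by (rule ext) (simp add: algebra_simps)
    ultimately show "(\<lambda>m. real (m + 1) * p * q ^ (m + 1 - 1)) \<longlonglongrightarrow> 0" by simp
  qed
  have "(\<lambda>m::nat. (1 - q ^ m - real m * p * q ^ (m - 1)) / 2) \<longlonglongrightarrow> (1 - 0 - 0) / 2"
    by (intro tendsto_intros a b) (use nq in auto)
  thus ?thesis by (simp add: q_def)
qed

theorem theorem1:
  fixes L n n1 n2 d :: nat and p :: real
  assumes "L > 0" and "d = 2 ^ L" and "n \<ge> 1"
    and "n1 > 0" and "n2 > 0" and "n1 + n2 = n + 1"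
    and "0 < p" and "p \<le> 1"
  shows "bernoulli_prob d n p (\<lambda>\<Omega>. unique_solution d n n1 n2 \<Omega> (X_nat d n))
           \<ge> (1 - (1 - p) ^ d - real d * p * (1 - p) ^ (d - 1)) / 2
       \<and> (\<lambda>m::nat. (1 - (1 - p) ^ m - real m * p * (1 - p) ^ (m - 1)) / 2)
           \<longlonglongrightarrow> 1 / 2"
proof -
  define h where "h = (2::nat) ^ (L - 1)"
  have dh: "d = 2 * h" using assms(1,2) unfolding h_def
    by (metis Suc_diff_1 power_Suc)
  have h1: "1 \<le> h" unfolding h_def by simp
  have n0: "0 < n" using assms(3) by simp
  define E0 where "E0 = (\<lambda>j. (j, 0::nat)) ` {j. j < d \<and> even j}"
  define O0 where "O0 = (\<lambda>j. (j, 0::nat)) ` {j. j < d \<and> odd j}"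
  define W where "W = {0..<d} \<times> {0..<n}"
  define f where "f \<Omega> = p ^ card \<Omega> * (1 - p) ^ (d * n - card \<Omega>)" for \<Omega> :: "(nat \<times> nat) set"
  have "(1 - (1 - p) ^ d - real d * p * (1 - p) ^ (d - 1)) / 2 \<le> (1 - (1 - p) ^ h)\<^sup>2"
    using prob_ineq[OF assms(7,8) h1] dh by simp
  also have "\<dots> = bernoulli_prob d n p (\<lambda>\<Omega>. \<Omega> \<inter> E0 \<noteq> {} \<and> \<Omega> \<inter> O0 \<noteq> {})"
    unfolding E0_def O0_def by (rule bern_Ev[OF dh n0, symmetric])
  also have "\<dots> = (\<Sum>\<Omega> | \<Omega> \<subseteq> W \<and> \<Omega> \<inter> E0 \<noteq> {} \<and> \<Omega> \<inter> O0 \<noteq> {}. f \<Omega>)"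
    by (simp add: bernoulli_prob_def W_def f_def)
  also have "\<dots> \<le> (\<Sum>\<Omega> | \<Omega> \<subseteq> W \<and> unique_solution d n n1 n2 \<Omega> (X_nat d n). f \<Omega>)"
  proof (rule sum_mono2)
    show "finite {\<Omega>. \<Omega> \<subseteq> W \<and> unique_solution d n n1 n2 \<Omega> (X_nat d n)}"
      by (rule finite_subset[of _ "Pow W"]) (auto simp: W_def)
    show "{\<Omega>. \<Omega> \<subseteq> W \<and> \<Omega> \<inter> E0 \<noteq> {} \<and> \<Omega> \<inter> O0 \<noteq> {}}
        \<subseteq> {\<Omega>. \<Omega> \<subseteq> W \<and> unique_solution d n n1 n2 \<Omega> (X_nat d n)}"
    proof
      fix \<Omega> assume "\<Omega> \<in> {\<Omega>. \<Omega> \<subseteq> W \<and> \<Omega> \<inter> E0 \<noteq> {} \<and> \<Omega> \<inter> O0 \<noteq> {}}"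
      hence S: "\<Omega> \<subseteq> W" and e: "\<Omega> \<inter> E0 \<noteq> {}" and o: "\<Omega> \<inter> O0 \<noteq> {}" by auto
      obtain j1 where j1: "(j1,0) \<in> \<Omega>" "j1 < d" "even j1" using e by (auto simp: E0_def)
      obtain j2 where j2: "(j2,0) \<in> \<Omega>" "j2 < d" "odd j2" using o by (auto simp: O0_def)
      have "unique_solution d n n1 n2 \<Omega> (X_nat d n)"
        by (rule unique_sol[OF assms(2) assms(6) assms(4) assms(5) j1(2) j2(2) j1(3) j2(3) j1(1) j2(1)])
      thus "\<Omega> \<in> {\<Omega>. \<Omega> \<subseteq> W \<and> unique_solution d n n1 n2 \<Omega> (X_nat d n)}" using S by simp
    qed
    fix \<Omega> :: "(nat \<times> nat) set"
    show "0 \<le> f \<Omega>" using assms(7,8) by (simp add: f_def)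
  qed
  also have "\<dots> = bernoulli_prob d n p (\<lambda>\<Omega>. unique_solution d n n1 n2 \<Omega> (X_nat d n))"
    by (simp add: bernoulli_prob_def W_def f_def)
  finally have ge: "(1 - (1 - p) ^ d - real d * p * (1 - p) ^ (d - 1)) / 2
      \<le> bernoulli_prob d n p (\<lambda>\<Omega>. unique_solution d n n1 n2 \<Omega> (X_nat d n))" .
  have lim: "(\<lambda>m::nat. (1 - (1 - p) ^ m - real m * p * (1 - p) ^ (m - 1)) / 2) \<longlonglongrightarrow> 1 / 2"
    by (rule limit_part) (use assms in auto)
  show ?thesis using ge lim by simp
qed


end
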